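(* For every integer $n\ge 2$, the set of lower accumulation points for $n$ runners contains $\mathcal{S}(n-1)$.
   Context: For a real number $x$, $\Vert x\Vert$ denotes the distance from $x$ to the nearest integer. For positive integers $v_1,\ldots,v_n$, $\mathrm{ML}(v_1,\ldots,v_n)=\max_{t\in\mathbb{R}}\min_{1\le i\le n}\Vert t v_i\Vert$. Let $\mathcal{S}(n)=\{\mathrm{ML}(v_1,\ldots,v_n): v_1,\ldots,v_n \text{ positive integers}\}$. A real number $A$ is a lower accumulation point for $n$ runners if $\mathcal{S}(n)$ contains a sequence of elements strictly less than $A$ converging to $A$. *)

theory Defs
  imports "HOL-Analysis.Analysis"
begin

definition dist_int :: "real \<Rightarrow> real" where
  "dist_int x = \<bar>x - of_int (round x)\<bar>"

text \<open>ML(v_1,...,v_n) = max over t of min_i ||t v_i||; speeds indexed 1..n.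
  The maximum is attained, so it is rendered as the supremum.\<close>
definition lonely_ML :: "nat \<Rightarrow> (nat \<Rightarrow> nat) \<Rightarrow> real" where
  "lonely_ML n v = (SUP t::real. Min ((\<lambda>i. dist_int (t * real (v i))) ` {1..n}))"

definition S :: "nat \<Rightarrow> real set" where
  "S n = {lonely_ML n v | v. \<forall>i\<in>{1..n}. 0 < v i}"

definition lower_acc_point :: "nat \<Rightarrow> real \<Rightarrow> bool" where
  "lower_acc_point n A \<longleftrightarrow>
     (\<exists>x :: nat \<Rightarrow> real. (\<forall>k. x k \<in> S n \<and> x k < A) \<and> x \<longlonglongrightarrow> A)"

end

theory Submission
  imports Defs
begin

lemma di_le_half: "dist_int x \<le> 1/2"
  unfolding dist_int_def using of_int_round_abs_le[of x] by linarith

lemma di_nonneg: "0 \<le> dist_int x"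
  unfolding dist_int_def by simp

lemma di_le: "dist_int x \<le> \<bar>x - of_int k\<bar>"
  unfolding dist_int_def by (rule round_diff_minimal)

lemma di_lip: "dist_int x \<le> dist_int y + \<bar>x - y\<bar>"
proof -
  have "dist_int x \<le> \<bar>x - of_int (round y)\<bar>" by (rule di_le)
  also have "\<dots> \<le> \<bar>x - y\<bar> + \<bar>y - of_int (round y)\<bar>" by linarith
  finally show ?thesis unfolding dist_int_def by linarith
qed

lemma di_eq:
  assumes "\<bar>x - of_int k\<bar> \<le> 1/2"
  shows "dist_int x = \<bar>x - of_int k\<bar>"
proof (cases "\<bar>x - of_int k\<bar> < 1/2")
  case True
  then show ?thesis using round_unique'[OF True] unfolding dist_int_def by simp
next
  case False
  hence h: "\<bar>x - of_int k\<bar> = 1/2" using assms by linarith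
  have "1/2 \<le> \<bar>x - of_int (round x)\<bar>"
  proof -
    define j where "j = round x - k"
    have e: "x - of_int (round x) = (x - of_int k) - of_int j" unfolding j_def by simp
    consider "j \<le> -1" | "j = 0" | "j \<ge> 1" by linarith
    then show ?thesis
    proof cases
      case 1 hence "(of_int j::real) \<le> -1" by simp
      then show ?thesis unfolding e using h by linarith
    next
      case 2 then show ?thesis unfolding e using h by simp
    next
      case 3 hence "(of_int j::real) \<ge> 1" by simp
      then show ?thesis unfolding e using h by linarith
    qed
  qed
  then show ?thesis using h di_le_half[of x] unfolding dist_int_def by linarith
qed

lemma di_int: "dist_int (x + of_int k) = dist_int x"
proof -
  have "dist_int (x + of_int k) \<le> dist_int x"
    using di_le[of "x + of_int k" "round x + k"] unfolding dist_int_def by simp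
  moreover have "dist_int x \<le> dist_int (x + of_int k)"
    using di_le[of x "round (x + of_int k) - k"] unfolding dist_int_def by simp
  ultimately show ?thesis by simp
qed

lemma di_of_int: "dist_int (of_int k) = 0"
  unfolding dist_int_def by simp

lemma di_pos: "0 < x \<Longrightarrow> x < 1 \<Longrightarrow> 0 < dist_int x"
proof (rule ccontr)
  assume a: "0 < x" "x < 1" "\<not> 0 < dist_int x"
  hence "x = of_int (round x)" using di_nonneg[of x] unfolding dist_int_def by simp
  then obtain r :: int where "x = of_int r" by blast
  with a show False by simp
qed


definition FF :: "nat \<Rightarrow> (nat \<Rightarrow> nat) \<Rightarrow> real \<Rightarrow> real" where
  "FF m v t = Min ((\<lambda>i. dist_int (t * real (v i))) ` {1..m})"

lemma lonely_FF: "lonely_ML m v = (SUP t. FF m v t)"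
  unfolding lonely_ML_def FF_def by simp

lemma FF_le_i: "i \<in> {1..m} \<Longrightarrow> FF m v t \<le> dist_int (t * real (v i))"
  unfolding FF_def by (rule Min_le) auto

lemma FF_in: "m \<ge> 1 \<Longrightarrow> \<exists>i\<in>{1..m}. FF m v t = dist_int (t * real (v i))"
proof -
  assume "m \<ge> 1"
  hence "FF m v t \<in> (\<lambda>i. dist_int (t * real (v i))) ` {1..m}"
    unfolding FF_def by (intro Min_in) auto
  then show ?thesis by auto
qed

lemma FF_ge: "m \<ge> 1 \<Longrightarrow> (\<And>i. i \<in> {1..m} \<Longrightarrow> c \<le> dist_int (t * real (v i))) \<Longrightarrow> c \<le> FF m v t"
  using FF_in by metis

lemma FF_gt: "m \<ge> 1 \<Longrightarrow> (\<And>i. i \<in> {1..m} \<Longrightarrow> c < dist_int (t * real (v i))) \<Longrightarrow> c < FF m v t"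
  using FF_in by metis

lemma FF_le_half: "m \<ge> 1 \<Longrightarrow> FF m v t \<le> 1/2"
  using FF_in[of m v t] di_le_half by metis

lemma FF_nonneg: "m \<ge> 1 \<Longrightarrow> 0 \<le> FF m v t"
  using FF_in[of m v t] di_nonneg by metis

lemma FF_lip:
  assumes "m \<ge> 1" "\<And>i. i \<in> {1..m} \<Longrightarrow> real (v i) \<le> L"
  shows "FF m v s \<le> FF m v t + L * \<bar>s - t\<bar>"
proof -
  obtain j where j: "j \<in> {1..m}" "FF m v t = dist_int (t * real (v j))" using FF_in[OF assms(1)] by blast
  have "FF m v s \<le> dist_int (s * real (v j))" by (rule FF_le_i[OF j(1)])
  also have "\<dots> \<le> dist_int (t * real (v j)) + \<bar>s * real (v j) - t * real (v j)\<bar>" by (rule di_lip)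
  also have "\<bar>s * real (v j) - t * real (v j)\<bar> = real (v j) * \<bar>s - t\<bar>"
    by (simp add: abs_mult left_diff_distrib[symmetric])
  also have "real (v j) * \<bar>s - t\<bar> \<le> L * \<bar>s - t\<bar>"
    using assms(2)[OF j(1)] by (simp add: mult_right_mono)
  finally show ?thesis using j(2) by simp
qed

lemma FF_periodic: "FF m v (t + of_int k) = FF m v t"
proof -
  have "\<And>i. dist_int ((t + of_int k) * real (v i)) = dist_int (t * real (v i))"
  proof -
    fix i
    have "(t + of_int k) * real (v i) = t * real (v i) + of_int (k * int (v i))"
      by (simp add: algebra_simps)
    then show "dist_int ((t + of_int k) * real (v i)) = dist_int (t * real (v i))"
      using di_int[of "t * real (v i)" "k * int (v i)"] by simp
  qed
  then show ?thesis unfolding FF_def by simp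
qed

lemma FF_bdd: "m \<ge> 1 \<Longrightarrow> bdd_above (range (FF m v))"
  using FF_le_half[of m v] by (intro bdd_aboveI[where M="1/2"]) auto

lemma FF_le_ML: "m \<ge> 1 \<Longrightarrow> FF m v t \<le> lonely_ML m v"
  unfolding lonely_FF by (rule cSUP_upper[OF _ FF_bdd]) auto

lemma lonely_le_half: "m \<ge> 1 \<Longrightarrow> lonely_ML m v \<le> 1/2"
  unfolding lonely_FF by (rule cSUP_least) (use FF_le_half in auto)

lemma lonely_pos:
  assumes "m \<ge> 1" "\<forall>i\<in>{1..m}. 0 < v i"
  shows "0 < lonely_ML m v"
proof -
  define P where "P = (\<Prod>i\<in>{1..m}. v i)"
  define t where "t = 1 / (real P + 1)"
  have "0 < FF m v t"
  proof (rule FF_gt[OF assms(1)])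
    fix i assume i: "i \<in> {1..m}"
    have "P > 0" unfolding P_def using assms(2) by (intro prod_pos) auto
    moreover have "v i dvd P" unfolding P_def using i by (intro dvd_prodI) auto
    ultimately have "v i \<le> P" by (intro dvd_imp_le)
    hence "t * real (v i) < 1" "0 < t * real (v i)" using assms(2) i unfolding t_def
      by (auto simp: field_simps)
    then show "0 < dist_int (t * real (v i))" by (rule di_pos[rotated])
  qed
  then show ?thesis using FF_le_ML[OF assms(1)] by (rule less_le_trans)
qed


lemma perturb:
  assumes m: "m \<ge> 1" and pos: "\<forall>i\<in>{1..m}. 0 < v i" and A: "0 \<le> A" "A < 1/2"
    and sg: "\<bar>\<sigma>\<bar> = (1::real)"
    and h: "\<forall>i\<in>{1..m}. A < dist_int (t * real (v i)) \<or>
              t * real (v i) - of_int (round (t * real (v i))) = \<sigma> * A"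
  shows "\<exists>t'. A < FF m v t'"
proof -
  define \<delta> where "\<delta> i = (if A < dist_int (t * real (v i)) then dist_int (t * real (v i)) - A else 1/2 - A)" for i
  define d where "d = Min (\<delta> ` {1..m})"
  have "\<forall>x\<in>\<delta> ` {1..m}. 0 < x" using A by (auto simp: \<delta>_def)
  moreover have "\<delta> ` {1..m} \<noteq> {}" using m by auto
  ultimately have dpos: "0 < d" unfolding d_def by (subst Min_gr_iff) auto
  have dle: "d \<le> \<delta> i" if "i \<in> {1..m}" for i unfolding d_def using that by (intro Min_le) auto
  define L where "L = (\<Sum>i\<in>{1..m}. real (v i))"
  have vL: "real (v i) \<le> L" if "i \<in> {1..m}" for i
    unfolding L_def using that by (intro member_le_sum) auto
  have Lpos: "0 < L" using vL[of 1] pos m by force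
  define \<epsilon> where "\<epsilon> = d / (2 * L)"
  have epos: "0 < \<epsilon>" unfolding \<epsilon>_def using dpos Lpos by simp
  have ev: "\<epsilon> * real (v i) < \<delta> i" if i: "i \<in> {1..m}" for i
  proof -
    have "\<epsilon> * real (v i) \<le> \<epsilon> * L" using vL[OF i] epos by (simp add: mult_left_mono)
    also have "\<dots> = d / 2" unfolding \<epsilon>_def using Lpos by simp
    also have "\<dots> < \<delta> i" using dle[OF i] dpos by simp
    finally show ?thesis .
  qed
  define t' where "t' = t + \<sigma> * \<epsilon>"
  have "A < FF m v t'"
  proof (rule FF_gt[OF m])
    fix i assume i: "i \<in> {1..m}"
    have evpos: "0 < \<epsilon> * real (v i)" using epos pos i by simp
    have diff: "t' * real (v i) - t * real (v i) = \<sigma> * (\<epsilon> * real (v i))"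
      unfolding t'_def by (simp add: algebra_simps)
    have adiff: "\<bar>t' * real (v i) - t * real (v i)\<bar> = \<epsilon> * real (v i)"
      unfolding diff using sg evpos epos by (simp add: abs_mult)
    show "A < dist_int (t' * real (v i))"
    proof (cases "A < dist_int (t * real (v i))")
      case True
      have "dist_int (t * real (v i)) \<le> dist_int (t' * real (v i)) + \<bar>t * real (v i) - t' * real (v i)\<bar>"
        by (rule di_lip)
      moreover have "\<bar>t * real (v i) - t' * real (v i)\<bar> = \<epsilon> * real (v i)" using adiff by linarith
      moreover have "\<epsilon> * real (v i) < dist_int (t * real (v i)) - A" using ev[OF i] True by (simp add: \<delta>_def)
      ultimately show ?thesis by linarith
    next
      case False
      hence e: "t * real (v i) - of_int (round (t * real (v i))) = \<sigma> * A" using h i by blast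
      have "t' * real (v i) - of_int (round (t * real (v i))) = \<sigma> * (A + \<epsilon> * real (v i))"
        using e diff by (simp add: algebra_simps)
      hence ab: "\<bar>t' * real (v i) - of_int (round (t * real (v i)))\<bar> = A + \<epsilon> * real (v i)"
        using sg A evpos by (simp add: abs_mult)
      have "\<epsilon> * real (v i) < 1/2 - A" using ev[OF i] False by (simp add: \<delta>_def)
      hence "dist_int (t' * real (v i)) = A + \<epsilon> * real (v i)"
        using ab by (subst di_eq[of _ "round (t * real (v i))"]) auto
      then show ?thesis using evpos by simp
    qed
  qed
  then show ?thesis by blast
qed

lemma key:
  assumes m: "m \<ge> 1" and pos: "\<forall>i\<in>{1..m}. 0 < v i" and eq: "FF m v t = lonely_ML m v"
  shows "\<exists>i\<in>{1..m}. \<exists>j\<in>{1..m}. t * (real (v i) + real (v j)) \<in> \<int>"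
proof -
  define A where "A = lonely_ML m v"
  define e where "e i = t * real (v i) - of_int (round (t * real (v i)))" for i
  have de: "dist_int (t * real (v i)) = \<bar>e i\<bar>" for i unfolding dist_int_def e_def by simp
  have ge: "A \<le> \<bar>e i\<bar>" if "i \<in> {1..m}" for i
    using FF_le_i[OF that, of v t] eq de unfolding A_def by simp
  have A0: "0 \<le> A" using FF_nonneg[OF m] eq unfolding A_def by metis
  have Ah: "A \<le> 1/2" unfolding A_def by (rule lonely_le_half[OF m])
  have sumint: "t * (real (v i) + real (v j)) = e i + e j + of_int (round (t * real (v i)) + round (t * real (v j)))" for i j
    unfolding e_def by (simp add: algebra_simps)
  show ?thesis
  proof (cases "A = 1/2")
    case True
    have i1: "1 \<in> {1..m}" using m by simp
    have "\<bar>e 1\<bar> = 1/2" using ge[OF i1] de[of 1] di_le_half[of "t * real (v 1)"] True by linarith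
    hence "e 1 + e 1 = 1 \<or> e 1 + e 1 = -1" by linarith
    hence "e 1 + e 1 \<in> \<int>" by (metis Ints_1 Ints_minus)
    hence "t * (real (v 1) + real (v 1)) \<in> \<int>" proof -
      have "e 1 + e 1 + of_int (round (t * real (v 1)) + round (t * real (v 1))) \<in> \<int>"
        using \<open>e 1 + e 1 \<in> \<int>\<close> by (rule Ints_add[OF _ Ints_of_int])
      then show ?thesis by (simp only: sumint)
    qed
    then show ?thesis using i1 by blast
  next
    case False
    hence Al: "A < 1/2" using Ah by simp
    show ?thesis
    proof (cases "\<exists>i\<in>{1..m}. \<exists>j\<in>{1..m}. e i = A \<and> e j = - A")
      case True
      then obtain i j where ij: "i \<in> {1..m}" "j \<in> {1..m}" "e i = A" "e j = -A" by blast
      hence "t * (real (v i) + real (v j)) \<in> \<int>" unfolding sumint by simp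
      then show ?thesis using ij by blast
    next
      case False
      have "\<exists>\<sigma>::real. \<bar>\<sigma>\<bar> = 1 \<and> (\<forall>i\<in>{1..m}. A < dist_int (t * real (v i)) \<or> e i = \<sigma> * A)"
      proof (cases "\<exists>i\<in>{1..m}. e i = A")
        case True
        then have nm: "\<forall>j\<in>{1..m}. e j \<noteq> -A" using False by blast
        have "A < dist_int (t * real (v i)) \<or> e i = 1 * A" if i: "i \<in> {1..m}" for i
        proof -
          have "A < \<bar>e i\<bar> \<or> e i = A \<or> e i = -A" using ge[OF i] by linarith
          then show ?thesis using nm i de[of i] by auto
        qed
        then show ?thesis by (intro exI[of _ 1]) simp
      next
        case False
        have "A < dist_int (t * real (v i)) \<or> e i = (-1) * A" if i: "i \<in> {1..m}" for i
        proof -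
          have "A < \<bar>e i\<bar> \<or> e i = A \<or> e i = -A" using ge[OF i] by linarith
          then show ?thesis using False i de[of i] by auto
        qed
        then show ?thesis by (intro exI[of _ "-1"]) simp
      qed
      then obtain \<sigma> :: real where "\<bar>\<sigma>\<bar> = 1" "\<forall>i\<in>{1..m}. A < dist_int (t * real (v i)) \<or> e i = \<sigma> * A"
        by blast
      from perturb[OF m pos A0 Al this[unfolded e_def]] obtain t' where "A < FF m v t'" by blast
      with FF_le_ML[OF m, of v t'] have False unfolding A_def by simp
      then show ?thesis ..
    qed
  qed
qed


lemma FF_Suc:
  assumes m: "m \<ge> 1"
  shows "FF (Suc m) (v(Suc m := w)) t = min (FF m v t) (dist_int (t * real w))"
proof -
  have s: "{1..Suc m} = insert (Suc m) {1..m}" by auto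
  have c: "(\<lambda>i. dist_int (t * real ((v(Suc m := w)) i))) ` {1..m} = (\<lambda>i. dist_int (t * real (v i))) ` {1..m}"
    by (intro image_cong) auto
  have "FF (Suc m) (v(Suc m := w)) t = min (dist_int (t * real w)) (FF m v t)"
    unfolding FF_def s image_insert c using m by (subst Min_insert) auto
  then show ?thesis by simp
qed

lemma FF_cont:
  assumes m: "m \<ge> 1"
  shows "continuous_on X (FF m v)"
proof -
  define L where "L = (\<Sum>i\<in>{1..m}. real (v i))"
  have vL: "real (v i) \<le> L" if "i \<in> {1..m}" for i
    unfolding L_def using that by (intro member_le_sum) auto
  have L0: "0 \<le> L" unfolding L_def by (intro sum_nonneg) auto
  have "L-lipschitz_on X (FF m v)"
  proof (rule lipschitz_onI[OF _ L0])
    fix x y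
    have "FF m v x \<le> FF m v y + L * \<bar>x - y\<bar>" "FF m v y \<le> FF m v x + L * \<bar>y - x\<bar>"
      using FF_lip[where v=v and L=L, OF m vL] by blast+
    then show "dist (FF m v x) (FF m v y) \<le> L * dist x y"
      unfolding dist_real_def by (simp add: abs_minus_commute abs_le_iff)
  qed
  then show ?thesis by (rule lipschitz_on_continuous_on)
qed

lemma upper:
  assumes m: "m \<ge> 1" and pos: "\<forall>i\<in>{1..m}. 0 < v i"
    and hw: "\<And>t. FF m v t = lonely_ML m v \<Longrightarrow> t * real w \<in> \<int>"
  shows "lonely_ML (Suc m) (v(Suc m := w)) < lonely_ML m v"
proof -
  define A where "A = lonely_ML m v"
  define G where "G = FF (Suc m) (v(Suc m := w))"
  have Apos: "0 < A" unfolding A_def by (rule lonely_pos[OF m pos])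
  have Glt: "G t < A" for t
  proof (cases "FF m v t = A")
    case True
    then obtain z :: int where "t * real w = of_int z" using hw unfolding A_def by (metis Ints_cases)
    hence "dist_int (t * real w) = 0" using di_of_int by simp
    then show ?thesis unfolding G_def FF_Suc[OF m] using Apos by simp
  next
    case False
    hence "FF m v t < A" using FF_le_ML[OF m] unfolding A_def by (metis order_le_less)
    then show ?thesis unfolding G_def FF_Suc[OF m] by simp
  qed
  have "continuous_on {0..1} G" unfolding G_def by (rule FF_cont) (use m in simp)
  then obtain x0 where x0: "x0 \<in> {0..1}" "\<forall>y\<in>{0..1}. G y \<le> G x0"
    using continuous_attains_sup[of "{0..1::real}" G] by auto
  have "G t \<le> G x0" for t
  proof -
    have "G t = G (t + of_int (- floor t))" unfolding G_def by (rule FF_periodic[symmetric])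
    also have "\<dots> \<le> G x0" using x0(2) by (intro bspec[OF x0(2)])
      (auto simp: floor_le_iff less_floor_iff, linarith)
    finally show ?thesis .
  qed
  hence "lonely_ML (Suc m) (v(Suc m := w)) \<le> G x0"
    unfolding lonely_FF G_def by (intro cSUP_least) auto
  with Glt[of x0] show ?thesis unfolding A_def by simp
qed

lemma lower:
  assumes m: "m \<ge> 1" and w: "w > 0"
  shows "lonely_ML m v - (\<Sum>i\<in>{1..m}. real (v i)) / real w \<le> lonely_ML (Suc m) (v(Suc m := w))"
proof -
  define A where "A = lonely_ML m v"
  define L where "L = (\<Sum>i\<in>{1..m}. real (v i))"
  have vL: "real (v i) \<le> L" if "i \<in> {1..m}" for i
    unfolding L_def using that by (intro member_le_sum) auto
  have L0: "0 \<le> L" unfolding L_def by (intro sum_nonneg) auto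
  have Ah: "A \<le> 1/2" unfolding A_def by (rule lonely_le_half[OF m])
  have bdd: "bdd_above (range (FF (Suc m) (v(Suc m := w))))" by (rule FF_bdd) simp
  show ?thesis unfolding A_def[symmetric] L_def[symmetric]
  proof (rule field_le_epsilon)
    fix \<epsilon> :: real assume e: "0 < \<epsilon>"
    have "A - \<epsilon> < A" using e by simp
    then obtain t0 where t0: "A - \<epsilon> < FF m v t0" unfolding A_def lonely_FF
      using less_cSUP_iff[of UNIV "FF m v" "A - \<epsilon>"] FF_bdd[OF m, of v] unfolding A_def lonely_FF by auto
    define t where "t = (of_int (floor (t0 * real w)) + 1/2) / real w"
    have tw: "t * real w = of_int (floor (t0 * real w)) + 1/2" unfolding t_def using w by simp
    have dt: "dist_int (t * real w) = 1/2" unfolding tw by (subst di_eq[of _ "floor (t0 * real w)"]) auto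
    have "\<bar>t * real w - t0 * real w\<bar> \<le> 1" unfolding tw
      using floor_correct[of "t0 * real w"] by linarith
    hence "\<bar>t - t0\<bar> * real w \<le> 1" by (simp add: left_diff_distrib[symmetric] abs_mult)
    hence td: "\<bar>t - t0\<bar> \<le> 1 / real w" using w by (simp add: field_simps)
    have "FF m v t0 \<le> FF m v t + L * \<bar>t0 - t\<bar>" by (rule FF_lip[where v=v and L=L, OF m vL])
    moreover have "L * \<bar>t0 - t\<bar> \<le> L * (1 / real w)" using td L0
      by (intro mult_left_mono) (auto simp: abs_minus_commute)
    ultimately have "A - \<epsilon> - L / real w \<le> FF m v t" using t0 by simp
    hence "A - L / real w \<le> FF (Suc m) (v(Suc m := w)) t + \<epsilon>"
      unfolding FF_Suc[OF m] dt using Ah e divide_nonneg_nonneg[OF L0, of "real w"] by (simp add: min_def)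
    also have "FF (Suc m) (v(Suc m := w)) t \<le> lonely_ML (Suc m) (v(Suc m := w))"
      unfolding lonely_FF by (rule cSUP_upper[OF _ bdd]) simp
    finally show "A - L / real w \<le> lonely_ML (Suc m) (v(Suc m := w)) + \<epsilon>" by simp
  qed
qed


theorem theorem9p5:
  fixes n :: nat
  assumes "n \<ge> 2"
  shows "S (n - 1) \<subseteq> {A. lower_acc_point n A}"
proof
  fix A assume "A \<in> S (n - 1)"
  then obtain v where Av: "A = lonely_ML (n - 1) v" and pos: "\<forall>i\<in>{1..n - 1}. 0 < v i"
    unfolding S_def by blast
  define m where "m = n - 1"
  have m: "m \<ge> 1" and nm: "n = Suc m" using assms unfolding m_def by auto
  have Am: "A = lonely_ML m v" and posm: "\<forall>i\<in>{1..m}. 0 < v i" using Av pos unfolding m_def by auto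
  define D where "D = (\<Prod>i\<in>{1..m}. \<Prod>j\<in>{1..m}. v i + v j)"
  have Dpos: "D > 0" unfolding D_def using posm by (intro prod_pos) auto
  have hD: "t * real D \<in> \<int>" if tA: "FF m v t = lonely_ML m v" for t
  proof -
    obtain i j where ij: "i \<in> {1..m}" "j \<in> {1..m}" "t * (real (v i) + real (v j)) \<in> \<int>"
      using key[OF m posm tA] by blast
    have "(v i + v j) dvd (\<Prod>j\<in>{1..m}. v i + v j)" using ij by (intro dvd_prodI) auto
    also have "\<dots> dvd D" unfolding D_def using ij by (intro dvd_prodI) auto
    finally obtain q where q: "D = (v i + v j) * q" by (elim dvdE)
    have "t * real D = (t * (real (v i) + real (v j))) * real q" unfolding q by simp
    also have "\<dots> \<in> \<int>" using ij(3) by (rule Ints_mult) simp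
    finally show ?thesis .
  qed
  define w where "w k = Suc k * D" for k
  define x where "x k = lonely_ML (Suc m) (v(Suc m := w k))" for k
  define L where "L = (\<Sum>i\<in>{1..m}. real (v i))"
  have L0: "0 \<le> L" unfolding L_def by (intro sum_nonneg) auto
  have wpos: "w k > 0" for k unfolding w_def using Dpos by simp
  have xS: "x k \<in> S n" for k
    unfolding S_def x_def nm using posm wpos by auto
  have xlt: "x k < A" for k
  proof -
    have "t * real (w k) \<in> \<int>" if "FF m v t = lonely_ML m v" for t
    proof -
      have "t * real (w k) = (t * real D) * real (Suc k)" unfolding w_def by (simp add: algebra_simps)
      also have "\<dots> \<in> \<int>" using hD[OF that] by (rule Ints_mult) simp
      finally show ?thesis .
    qed
    then show ?thesis unfolding x_def Am by (rule upper[OF m posm])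
  qed
  have xge: "A - L * inverse (real (Suc k)) \<le> x k" for k
  proof -
    have "Suc k * 1 \<le> Suc k * D" using Dpos by (intro mult_le_mono2) simp
    hence "real (Suc k) \<le> real (w k)" unfolding w_def by (simp only: of_nat_le_iff mult_1_right)
    hence "L / real (w k) \<le> L / real (Suc k)" using L0
      by (intro divide_left_mono) auto
    moreover have "A - L / real (w k) \<le> x k"
      unfolding x_def Am L_def by (rule lower[OF m wpos])
    ultimately show ?thesis by (simp add: divide_inverse)
  qed
  have "(\<lambda>k. A - L * inverse (real (Suc k))) \<longlonglongrightarrow> A - L * 0"
    by (intro tendsto_intros LIMSEQ_inverse_real_of_nat)
  hence lim1: "(\<lambda>k. A - L * inverse (real (Suc k))) \<longlonglongrightarrow> A" by simp
  have "x \<longlonglongrightarrow> A"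
    by (rule tendsto_sandwich[OF _ _ lim1 tendsto_const]) (use xge xlt less_imp_le in \<open>auto intro!: always_eventually\<close>)
  then show "A \<in> {A. lower_acc_point n A}"
    unfolding lower_acc_point_def using xS xlt by blast
qed

end
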